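(* Let $B\ge1$, $G=\{0,\frac1B,\dots,1\}$, $t\in G$ and $\eta\in(0,t)$. Any $f^*\in\mathcal U_\eta$ that maximises $\mathcal T_t$ over $\mathcal U_\eta$ satisfies: (i) $\mathcal E(f^* )=\eta$; (ii) writing $i_M:=B\max(\mathrm{supp}(f^* ))$, either (a) $f^*_0>f^*_1=f^*_2=\dots=f^*_{i_M-1}\ge f^*_{i_M}$, or (b) $i_M=Bt$ and $f^*_0=f^*_1=\dots=f^*_{i_M-1}\le f^*_{i_M}$.
   Context: Identify a probability mass function $f$ on $G$ with $(f_0,\dots,f_B)$, $f_i=f(i/B)$. Let $\mathcal T_t(f)=\sum_{i\ge Bt}f_i$, $\mathcal E(f)=\sum_{i=1}^B\frac iBf_i$ and $\mathrm{supp}(f)=\{i/B\in G:f_i>0\}$. $f$ is unimodal if there is $m$ with $f_0\le\dots\le f_m$ and $f_m\ge\dots\ge f_B$. $\mathcal U$ is the set of unimodal probability mass functions on $G$ and $\mathcal U_\eta=\{f\in\mathcal U:\mathcal E(f)\le\eta\}$. *)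

theory Defs
  imports Main "HOL.Real"
begin

text \<open>A probability mass function on the grid G = {0, 1/B, ..., 1} is identified
  with its vector of weights (f 0, ..., f B), f i = f(i/B); we represent it as a
  function on nat that vanishes outside {0..B}.\<close>

definition grid :: "nat \<Rightarrow> real set" where
  "grid B = {real i / real B | i. i \<le> B}"

definition is_pmf_G :: "nat \<Rightarrow> (nat \<Rightarrow> real) \<Rightarrow> bool" where
  "is_pmf_G B f \<longleftrightarrow> (\<forall>i\<le>B. 0 \<le> f i) \<and> (\<forall>i>B. f i = 0) \<and> (\<Sum>i=0..B. f i) = 1"

definition tailmass :: "nat \<Rightarrow> real \<Rightarrow> (nat \<Rightarrow> real) \<Rightarrow> real" where
  "tailmass B t f = (\<Sum>i\<in>{i. i \<le> B \<and> real B * t \<le> real i}. f i)"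

definition expect :: "nat \<Rightarrow> (nat \<Rightarrow> real) \<Rightarrow> real" where
  "expect B f = (\<Sum>i=1..B. (real i / real B) * f i)"

definition supp_idx :: "nat \<Rightarrow> (nat \<Rightarrow> real) \<Rightarrow> nat set" where
  "supp_idx B f = {i. i \<le> B \<and> 0 < f i}"

definition unimodal :: "nat \<Rightarrow> (nat \<Rightarrow> real) \<Rightarrow> bool" where
  "unimodal B f \<longleftrightarrow> (\<exists>m\<le>B. (\<forall>i j. i \<le> j \<and> j \<le> m \<longrightarrow> f i \<le> f j)
                            \<and> (\<forall>i j. m \<le> i \<and> i \<le> j \<and> j \<le> B \<longrightarrow> f j \<le> f i))"

definition U :: "nat \<Rightarrow> (nat \<Rightarrow> real) set" where
  "U B = {f. is_pmf_G B f \<and> unimodal B f}"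

definition U_eta :: "nat \<Rightarrow> real \<Rightarrow> (nat \<Rightarrow> real) set" where
  "U_eta B \<eta> = {f \<in> U B. expect B f \<le> \<eta>}"

end

theory Submission
  imports Defs
begin

definition mode :: "nat \<Rightarrow> (nat \<Rightarrow> real) \<Rightarrow> nat \<Rightarrow> bool" where
  "mode B f m \<longleftrightarrow> m \<le> B \<and> (\<forall>i j. i \<le> j \<and> j \<le> m \<longrightarrow> f i \<le> f j)
                            \<and> (\<forall>i j. m \<le> i \<and> i \<le> j \<and> j \<le> B \<longrightarrow> f j \<le> f i)"

lemma unimodal_mode: "unimodal B f \<longleftrightarrow> (\<exists>m. mode B f m)"
  unfolding unimodal_def mode_def by blast

lemma chain_le:
  fixes f :: "nat \<Rightarrow> real"
  shows "(\<forall>n. i \<le> n \<and> n < j \<longrightarrow> f n \<le> f (Suc n)) \<Longrightarrow> i \<le> j \<Longrightarrow> f i \<le> f j"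
proof (induction j)
  case 0 then show ?case by simp
next
  case (Suc j)
  show ?case
  proof (cases "i = Suc j")
    case True then show ?thesis by simp
  next
    case False
    then have "i \<le> j" using Suc.prems by simp
    then have "f i \<le> f j" using Suc by auto
    also have "f j \<le> f (Suc j)" using Suc.prems \<open>i \<le> j\<close> by auto
    finally show ?thesis .
  qed
qed

lemma chain_ge:
  fixes f :: "nat \<Rightarrow> real"
  shows "(\<forall>n. i \<le> n \<and> n < j \<longrightarrow> f (Suc n) \<le> f n) \<Longrightarrow> i \<le> j \<Longrightarrow> f j \<le> f i"
  using chain_le[of i j "\<lambda>n. - f n"] by auto

lemma mode_local:
  fixes f :: "nat \<Rightarrow> real"
  assumes "m \<le> B" "\<And>i. i < m \<Longrightarrow> f i \<le> f (Suc i)"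
    "\<And>i. m \<le> i \<Longrightarrow> i < B \<Longrightarrow> f (Suc i) \<le> f i"
  shows "mode B f m"
  unfolding mode_def
proof (intro conjI allI impI)
  show "m \<le> B" by fact
  fix i j assume "i \<le> j \<and> j \<le> m"
  then show "f i \<le> f j" using chain_le[of i j f] assms(2) by auto
next
  fix i j assume "m \<le> i \<and> i \<le> j \<and> j \<le> B"
  then show "f j \<le> f i" using chain_ge[of i j f] assms(3) by auto
qed

lemma mode_max: "mode B f m \<Longrightarrow> i \<le> B \<Longrightarrow> f i \<le> f m"
  unfolding mode_def by (cases "i \<le> m") auto

lemma mode_argmax:
  assumes "mode B f m" "j \<le> B" "f j = f m"
  shows "mode B f j"
proof (rule mode_local)
  show "j \<le> B" by fact
  have mB: "m \<le> B" using assms unfolding mode_def by auto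
  fix i
  assume "i < j"
  show "f i \<le> f (Suc i)"
  proof (cases "Suc i \<le> m")
    case True then show ?thesis using assms(1) unfolding mode_def by auto
  next
    case False
    then have "f j \<le> f (Suc i)" using assms(1) \<open>i < j\<close> assms(2) unfolding mode_def by auto
    moreover have "f i \<le> f m" using mode_max[OF assms(1), of i] \<open>i < j\<close> assms(2) by auto
    ultimately show ?thesis using assms(3) by auto
  qed
next
  have mB: "m \<le> B" using assms unfolding mode_def by auto
  fix i assume "j \<le> i" "i < B"
  show "f (Suc i) \<le> f i"
  proof (cases "m \<le> i")
    case True then show ?thesis using assms(1) \<open>i < B\<close> unfolding mode_def by auto
  next
    case False
    then have "f j \<le> f i" using assms(1) \<open>j \<le> i\<close> unfolding mode_def by auto
    moreover have "f (Suc i) \<le> f m" using mode_max[OF assms(1), of "Suc i"] \<open>i < B\<close> by auto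
    ultimately show ?thesis using assms(3) by auto
  qed
qed

lemma mode_mix:
  assumes "mode B f m" "mode B w m" "0 \<le> l" "l \<le> 1"
  shows "mode B (\<lambda>i. (1 - l) * f i + l * w i) m"
  using assms unfolding mode_def
  by (auto intro!: add_mono mult_left_mono)

lemma pmf_nonneg: "is_pmf_G B f \<Longrightarrow> 0 \<le> f i"
  unfolding is_pmf_G_def by (cases "i \<le> B") auto

lemma expect_alt: "expect B f = (\<Sum>i=0..B. real i / real B * f i)"
  unfolding expect_def
  by (cases B) (simp_all add: sum.atLeast_Suc_atMost)

lemma tail_alt: "real k = real B * t \<Longrightarrow> tailmass B t f = sum f {k..B}"
  unfolding tailmass_def
  by (rule sum.cong) auto

lemma expect_nonneg: "is_pmf_G B f \<Longrightarrow> 0 \<le> expect B f"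
  unfolding expect_def by (intro sum_nonneg mult_nonneg_nonneg) (auto simp: pmf_nonneg)

lemma expect_le1: assumes "is_pmf_G B f" shows "expect B f \<le> 1"
proof -
  have "expect B f \<le> (\<Sum>i=0..B. f i)"
    unfolding expect_alt
  proof (rule sum_mono)
    fix i assume "i \<in> {0..B}"
    then have "real i / real B \<le> 1" by (cases "B = 0") auto
    then show "real i / real B * f i \<le> f i"
      using pmf_nonneg[OF assms, of i] mult_right_mono by fastforce
  qed
  then show ?thesis using assms unfolding is_pmf_G_def by simp
qed


definition mv :: "(nat \<Rightarrow> real) \<Rightarrow> nat \<Rightarrow> nat \<Rightarrow> real \<Rightarrow> nat \<Rightarrow> real" where
 "mv f p q d = (\<lambda>i. f i + (if i = p then d else 0) - (if i = q then d else 0))"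

lemma sum_mv_gen:
  assumes "finite A"
  shows "(\<Sum>i\<in>A. c i * mv f p q d i) = (\<Sum>i\<in>A. c i * f i)
     + (if p \<in> A then c p * d else 0) - (if q \<in> A then c q * d else 0)"
proof -
  have "(\<Sum>i\<in>A. c i * mv f p q d i) = (\<Sum>i\<in>A. c i * f i + (if i = p then c p * d else 0) - (if i = q then c q * d else 0))"
    unfolding mv_def by (rule sum.cong) (auto simp: algebra_simps)
  also have "\<dots> = (\<Sum>i\<in>A. c i * f i) + (\<Sum>i\<in>A. (if i = p then c p * d else 0)) - (\<Sum>i\<in>A. (if i = q then c q * d else 0))"
    by (simp add: sum.distrib sum_subtractf)
  also have "\<dots> = (\<Sum>i\<in>A. c i * f i)
     + (if p \<in> A then c p * d else 0) - (if q \<in> A then c q * d else 0)"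
    using assms by (simp add: sum.delta)
  finally show ?thesis .
qed

lemma sum_mv:
  assumes "finite A"
  shows "sum (mv f p q d) A = sum f A
     + (if p \<in> A then d else 0) - (if q \<in> A then d else 0)"
  using sum_mv_gen[OF assms, of "\<lambda>_. 1" f p q d] by simp

lemma transfer_contra:
  assumes Emin: "\<And>g. g \<in> U B \<Longrightarrow> tailmass B t f \<le> tailmass B t g \<Longrightarrow> expect B f \<le> expect B g"
    and fU: "f \<in> U B" and pq: "p < q" "q \<le> B" and d: "0 < d" "d \<le> f q"
    and uni: "unimodal B (mv f p q d)"
    and side: "q < k \<or> k \<le> p" and k: "real k = real B * t" and B1: "B \<ge> 1"
  shows False
proof -
  let ?g = "mv f p q d"
  have pmf: "is_pmf_G B f" using fU unfolding U_def by auto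
  have "is_pmf_G B ?g"
    unfolding is_pmf_G_def
  proof (intro conjI allI impI)
    fix i assume "i \<le> B"
    show "0 \<le> ?g i" using pmf_nonneg[OF pmf, of i] d pq unfolding mv_def by auto
  next
    fix i assume "B < i"
    then show "?g i = 0" using pmf pq unfolding mv_def is_pmf_G_def by auto
  next
    show "sum ?g {0..B} = 1" using pmf pq by (simp add: sum_mv is_pmf_G_def)
  qed
  then have gU: "?g \<in> U B" using uni unfolding U_def by auto
  have "tailmass B t ?g = tailmass B t f"
    using side pq by (auto simp add: tail_alt[OF k] sum_mv)
  then have "expect B f \<le> expect B ?g" using Emin[OF gU] by simp
  moreover have "expect B ?g = expect B f + real p / real B * d - real q / real B * d"
    unfolding expect_alt using sum_mv_gen[of "{0..B}" "\<lambda>i. real i / real B" f p q d] pq by simp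
  moreover have "real p / real B * d < real q / real B * d"
    using pq d B1 by (intro mult_strict_right_mono divide_strict_right_mono) auto
  ultimately show False by simp
qed


lemma largest_mode:
  assumes "unimodal B g"
  shows "\<exists>m. mode B g m \<and> (\<forall>m'. mode B g m' \<longrightarrow> m' \<le> m)"
proof -
  let ?M = "{m. mode B g m}"
  have fin: "finite ?M" by (rule finite_subset[of _ "{..B}"]) (auto simp: mode_def)
  have ne: "?M \<noteq> {}" using assms unimodal_mode by auto
  show ?thesis
    using Max_in[OF fin ne] Max_ge[OF fin] by auto
qed

lemma expect_ge_tail:
  assumes pmf: "is_pmf_G B g" and k: "real k = real B * t" "1 \<le> k" and B1: "B \<ge> 1"
  shows "t * sum g {k..B} \<le> expect B g"
proof -
  have t: "t = real k / real B" using k B1 by (simp add: field_simps)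
  have "t * sum g {k..B} = (\<Sum>i=k..B. real k / real B * g i)" by (simp add: t sum_distrib_left)
  also have "\<dots> \<le> (\<Sum>i=k..B. real i / real B * g i)"
    by (rule sum_mono) (auto intro!: mult_right_mono divide_right_mono simp: pmf_nonneg[OF pmf])
  also have "\<dots> \<le> (\<Sum>i=1..B. real i / real B * g i)"
    by (rule sum_mono2) (use k in \<open>auto intro!: mult_nonneg_nonneg simp: pmf_nonneg[OF pmf]\<close>)
  finally show ?thesis unfolding expect_def .
qed

lemma mix_distr: "(c::real) * ((1 - l) * a + l * b) = (1 - l) * (c * a) + l * (c * b)"
  by (simp add: algebra_simps)

lemma L1:
  assumes B1: "B \<ge> 1" and k: "real k = real B * t" "1 \<le> k" "k \<le> B"
    and et: "\<eta> < t" and gU: "g \<in> U B" and gE: "expect B g < \<eta>"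
  shows "\<exists>h \<in> U_eta B \<eta>. tailmass B t g < tailmass B t h"
proof -
  have pmf: "is_pmf_G B g" and uni: "unimodal B g" using gU unfolding U_def by auto
  obtain m where mm: "mode B g m" and mlarge: "\<And>m'. mode B g m' \<Longrightarrow> m' \<le> m"
    using largest_mode[OF uni] by blast
  have mB: "m \<le> B" using mm unfolding mode_def by auto
  have t: "t = real k / real B" using k B1 by (simp add: field_simps)
  have t1: "t \<le> 1"
  proof -
    have "real B * t \<le> real B * 1" using k(1)[symmetric] k(3) by simp
    then show ?thesis using B1 by (simp add: mult_le_cancel_left)
  qed
  define c where "c = 1 / real (Suc B - m)"
  define w where "w = (\<lambda>i. if m \<le> i \<and> i \<le> B then c else 0)"
  have c0: "0 \<le> c" unfolding c_def by simp
  have sumw: "sum w {j..B} = real (Suc B - j) * c" if "m \<le> j" for j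
  proof -
    have "sum w {j..B} = sum (\<lambda>_. c) {j..B}" using that by (intro sum.cong) (auto simp: w_def)
    then show ?thesis by simp
  qed
  have wpmf: "is_pmf_G B w"
    unfolding is_pmf_G_def
  proof (intro conjI allI impI)
    show "\<And>i. i \<le> B \<Longrightarrow> 0 \<le> w i" using c0 by (auto simp: w_def)
    show "\<And>i. B < i \<Longrightarrow> w i = 0" by (auto simp: w_def)
    have "sum w {0..B} = sum w {m..B}"
      by (rule sum.mono_neutral_right) (auto simp: w_def)
    also have "\<dots> = 1" using sumw[of m] mB by (simp add: c_def)
    finally show "sum w {0..B} = 1" .
  qed
  have wmode: "mode B w m" by (rule mode_local) (use mB c0 in \<open>auto simp: w_def\<close>)
  have Ew: "expect B w \<le> 1" by (rule expect_le1[OF wpmf])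
  have Tlt: "sum g {k..B} < sum w {k..B}"
  proof (cases "k \<le> m")
    case True
    have "sum w {k..B} = sum w {m..B}"
      using True by (intro sum.mono_neutral_right) (auto simp: w_def)
    also have "\<dots> = 1" using sumw[of m] mB by (simp add: c_def)
    finally have w1: "sum w {k..B} = 1" .
    have "t * sum g {k..B} \<le> expect B g" by (rule expect_ge_tail[OF pmf k(1,2) B1])
    then have "t * sum g {k..B} < t" using gE et by simp
    then have "sum g {k..B} < 1" using et expect_nonneg[OF pmf] gE by simp
    then show ?thesis using w1 by simp
  next
    case False
    then have mk: "m < k" by simp
    have "g (Suc m) \<le> g m" using mm mk k unfolding mode_def by auto
    moreover have "g (Suc m) \<noteq> g m"
    proof
      assume "g (Suc m) = g m"
      then have "mode B g (Suc m)" using mode_argmax[OF mm, of "Suc m"] mk k by auto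
      then show False using mlarge by fastforce
    qed
    ultimately have gm: "g (Suc m) < g m" by simp
    have gmk: "g k \<le> g (Suc m)" using mm mk k unfolding mode_def by auto
    define T where "T = sum g {k..B}"
    define S where "S = sum g {m..<k}"
    have T1: "T \<le> real (Suc B - k) * g k"
    proof -
      have "T \<le> sum (\<lambda>_. g k) {k..B}" unfolding T_def
        by (rule sum_mono) (use mm mk in \<open>auto simp: mode_def\<close>)
      then show ?thesis by simp
    qed
    have S1: "real (k - m) * g k < S"
    proof -
      have "sum (\<lambda>_. g k) {m..<k} < S" unfolding S_def
      proof (rule sum_strict_mono_ex1)
        show "\<forall>x\<in>{m..<k}. g k \<le> g x" using mm mk k unfolding mode_def by auto
        show "\<exists>a\<in>{m..<k}. g k < g a" using mk gm gmk by (intro bexI[of _ m]) auto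
      qed auto
      then show ?thesis by simp
    qed
    have ST: "S + T \<le> 1"
    proof -
      have "{m..B} = {m..<k} \<union> {k..B}" using mk k by auto
      then have "sum g {m..B} = S + T" unfolding S_def T_def
        by (simp add: sum.union_disjoint ivl_disj_int)
      moreover have "sum g {m..B} \<le> sum g {0..B}"
        by (rule sum_mono2) (auto simp: pmf_nonneg[OF pmf])
      ultimately show ?thesis using pmf unfolding is_pmf_G_def by simp
    qed
    have T0: "0 \<le> T" unfolding T_def by (rule sum_nonneg) (simp add: pmf_nonneg[OF pmf])
    have gk0: "0 \<le> g k" by (simp add: pmf_nonneg[OF pmf])
    define a where "a = real (Suc B - k)"
    define b where "b = real (k - m)"
    have ab: "real (Suc B - m) = a + b" unfolding a_def b_def using mk k(3) by simp
    have a1: "1 \<le> a" unfolding a_def using k(3) by simp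
    have b1: "1 \<le> b" unfolding b_def using mk by simp
    have "T * b \<le> a * g k * b" using T1 b1 unfolding a_def by (simp add: mult_right_mono)
    moreover have "a * (b * g k) < a * S" using S1 a1 unfolding b_def by simp
    moreover have "a * (T + S) \<le> a" using ST a1 by (simp add: mult_left_le)
    ultimately have "T * (a + b) < a" by (simp add: algebra_simps)
    then have "T < a / (a + b)" using a1 b1 by (simp add: field_simps)
    moreover have "sum w {k..B} = a / (a + b)"
      using sumw[of k] mk ab unfolding c_def a_def by simp
    ultimately show ?thesis unfolding T_def by simp
  qed
  define l where "l = \<eta> - expect B g"
  have l0: "0 < l" unfolding l_def using gE by simp
  have l1: "l \<le> 1" unfolding l_def using et t1 expect_nonneg[OF pmf] by simp
  define h where "h = (\<lambda>i. (1 - l) * g i + l * w i)"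
  have hpmf: "is_pmf_G B h"
    unfolding is_pmf_G_def
  proof (intro conjI allI impI)
    show "\<And>i. i \<le> B \<Longrightarrow> 0 \<le> h i" unfolding h_def using l0 l1
      by (auto intro!: add_nonneg_nonneg mult_nonneg_nonneg simp: pmf_nonneg[OF pmf] pmf_nonneg[OF wpmf])
    show "\<And>i. B < i \<Longrightarrow> h i = 0" unfolding h_def using pmf wpmf unfolding is_pmf_G_def by auto
    show "sum h {0..B} = 1" unfolding h_def using pmf wpmf
      by (simp add: sum.distrib sum_distrib_left[symmetric] is_pmf_G_def)
  qed
  have hU: "h \<in> U B" unfolding U_def using hpmf mode_mix[OF mm wmode, of l] l0 l1 unimodal_mode
    by (auto simp: h_def)
  have "expect B h = (\<Sum>i=1..B. (1 - l) * (real i / real B * g i) + l * (real i / real B * w i))"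
    unfolding expect_def h_def
    by (rule sum.cong[OF refl]) (rule mix_distr)
  also have "\<dots> = (1 - l) * expect B g + l * expect B w"
    unfolding expect_def by (simp add: sum.distrib sum_distrib_left)
  also have "\<dots> \<le> expect B g + l"
  proof -
    have "l * expect B w \<le> l * 1" using Ew l0 by (intro mult_left_mono) auto
    moreover have "0 \<le> l * expect B g" using l0 expect_nonneg[OF pmf] by simp
    moreover have "(1 - l) * expect B g = expect B g - l * expect B g" by (simp add: left_diff_distrib)
    ultimately show ?thesis by linarith
  qed
  also have "\<dots> = \<eta>" unfolding l_def by simp
  finally have "h \<in> U_eta B \<eta>" using hU unfolding U_eta_def by auto
  moreover have "tailmass B t h = (1 - l) * tailmass B t g + l * tailmass B t w"
    unfolding tail_alt[OF k(1)] h_def by (simp add: sum.distrib sum_distrib_left)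
  moreover have "(1 - l) * tailmass B t g + l * tailmass B t w > tailmass B t g"
  proof -
    have "l * sum g {k..B} < l * sum w {k..B}" using Tlt l0 by simp
    moreover have "(1 - l) * sum g {k..B} = sum g {k..B} - l * sum g {k..B}" by (simp add: left_diff_distrib)
    ultimately show ?thesis unfolding tail_alt[OF k(1)] by linarith
  qed
  ultimately show ?thesis by (intro bexI[of _ h]) auto
qed


lemma chain_eq:
  fixes f :: "nat \<Rightarrow> real"
  assumes "\<And>j. a \<le> j \<Longrightarrow> Suc j < n \<Longrightarrow> f j = f (Suc j)"
  shows "a \<le> i \<Longrightarrow> i < n \<Longrightarrow> f i = f a"
proof (induction i)
  case 0 then show ?case by simp
next
  case (Suc i)
  show ?case
  proof (cases "a = Suc i")
    case True then show ?thesis by simp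
  next
    case False
    then have "a \<le> i" using Suc.prems by simp
    then show ?thesis using Suc assms[of i] by simp
  qed
qed

lemma mode_pos:
  assumes pmf: "is_pmf_G B f" and mm: "mode B f m"
  shows "0 < f m"
proof (rule ccontr)
  assume "\<not> 0 < f m"
  then have "\<And>i. i \<in> {0..B} \<Longrightarrow> f i \<le> 0" using mode_max[OF mm] by fastforce
  then have "sum f {0..B} \<le> 0" by (intro sum_nonpos) auto
  then show False using pmf unfolding is_pmf_G_def by simp
qed


theorem proposition4:
  fixes B :: nat and t \<eta> :: real and f :: "nat \<Rightarrow> real"
  assumes "B \<ge> 1"
    and "t \<in> grid B"
    and "0 < \<eta>" and "\<eta> < t"
    and "f \<in> U_eta B \<eta>"
    and "\<forall>g \<in> U_eta B \<eta>. tailmass B t g \<le> tailmass B t f"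
  shows "expect B f = \<eta> \<and>
    (let iM = Max (supp_idx B f) in
      (f 0 > f 1 \<and> (\<forall>i. 1 \<le> i \<and> i < iM \<longrightarrow> f i = f 1 \<and> f iM \<le> f i))
      \<or>
      (real iM = real B * t \<and> (\<forall>i. i < iM \<longrightarrow> f i = f 0 \<and> f i \<le> f iM)))"
proof -
  note B1 = assms(1)
  obtain k where kB: "k \<le> B" and tk: "t = real k / real B"
    using assms(2) unfolding grid_def by auto
  have k: "real k = real B * t" using tk B1 by simp
  have k1: "1 \<le> k" using tk assms(3,4) by (cases k) auto
  have fU: "f \<in> U B" and fE: "expect B f \<le> \<eta>" using assms(5) unfolding U_eta_def by auto
  have pmf: "is_pmf_G B f" and uni: "unimodal B f" using fU unfolding U_def by auto
  have maxf: "\<And>g. g \<in> U_eta B \<eta> \<Longrightarrow> tailmass B t g \<le> tailmass B t f" using assms(6) by auto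
  have Eeq: "expect B f = \<eta>"
  proof (rule ccontr)
    assume "expect B f \<noteq> \<eta>"
    then have "expect B f < \<eta>" using fE by simp
    then obtain h where "h \<in> U_eta B \<eta>" "tailmass B t f < tailmass B t h"
      using L1[OF B1 k k1 kB assms(4) fU] by blast
    then show False using maxf by fastforce
  qed
  have Emin: "expect B f \<le> expect B g" if gU: "g \<in> U B" and gT: "tailmass B t f \<le> tailmass B t g" for g
  proof (rule ccontr)
    assume "\<not> expect B f \<le> expect B g"
    then have "expect B g < \<eta>" using Eeq by simp
    then obtain h where "h \<in> U_eta B \<eta>" "tailmass B t g < tailmass B t h"
      using L1[OF B1 k k1 kB assms(4) gU] by blast
    then show False using maxf gT by fastforce
  qed
  note TC = transfer_contra[OF Emin fU _ _ _ _ _ _ k B1]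
  have fnn: "\<And>i. 0 \<le> f i" using pmf_nonneg[OF pmf] .
  obtain m0 where m0: "mode B f m0" using uni unimodal_mode by auto
  define iM where "iM = Max (supp_idx B f)"
  have finS: "finite (supp_idx B f)" unfolding supp_idx_def by auto
  have neS: "m0 \<in> supp_idx B f" using mode_pos[OF pmf m0] m0 unfolding supp_idx_def mode_def by auto
  have iMS: "iM \<in> supp_idx B f" unfolding iM_def using Max_in[OF finS] neS by auto
  have iMB: "iM \<le> B" and fiM: "0 < f iM" using iMS unfolding supp_idx_def by auto
  have fz: "f i = 0" if "iM < i" for i
  proof (cases "i \<le> B")
    case True
    then have "i \<notin> supp_idx B f" using Max_ge[OF finS] that unfolding iM_def by fastforce
    then show ?thesis using True fnn[of i] unfolding supp_idx_def by auto
  next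
    case False then show ?thesis using pmf unfolding is_pmf_G_def by auto
  qed
  have modeS: "m \<le> iM" if "mode B f m" for m
    using mode_pos[OF pmf that] that Max_ge[OF finS] unfolding iM_def supp_idx_def mode_def by auto
  have shape: "(f 0 > f 1 \<and> (\<forall>i. 1 \<le> i \<and> i < iM \<longrightarrow> f i = f 1 \<and> f iM \<le> f i))
      \<or> (real iM = real B * t \<and> (\<forall>i. i < iM \<longrightarrow> f i = f 0 \<and> f i \<le> f iM))"
  proof (cases "\<exists>m. mode B f m \<and> k \<le> m")
    case True
    then obtain m where mm: "mode B f m" and km: "k \<le> m" by blast
    have mB: "m \<le> B" using mm unfolding mode_def by auto
    have L: "\<And>i. i < m \<Longrightarrow> f i \<le> f (Suc i)" using mm unfolding mode_def by auto
    have R: "\<And>i. m \<le> i \<Longrightarrow> i < B \<Longrightarrow> f (Suc i) \<le> f i" using mm unfolding mode_def by auto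
    have A1: "iM = m"
    proof (rule ccontr)
      assume "iM \<noteq> m"
      then have miM: "m < iM" using modeS[OF mm] by simp
      have "mode B (mv f m iM (f iM)) m"
      proof (rule mode_local[OF mB])
        fix i assume "i < m" then show "mv f m iM (f iM) i \<le> mv f m iM (f iM) (Suc i)"
          using L[of i] miM fiM unfolding mv_def by auto
      next
        fix i assume "m \<le> i" "i < B"
        then show "mv f m iM (f iM) (Suc i) \<le> mv f m iM (f iM) i"
          using R[of i] miM fiM fnn[of i] fz[of "Suc i"] fz[of i] unfolding mv_def by auto
      qed
      then show False using miM iMB fiM km by (intro TC[of m iM "f iM"]) (auto simp: unimodal_mode)
    qed
    have A2: "m = k"
    proof (rule ccontr)
      assume "m \<noteq> k"
      then have km': "k < m" using km by simp
      define d where "d = f m / 2"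
      have fm: "0 < f m" using mode_pos[OF pmf mm] .
      have "mode B (mv f (m - 1) m d) (m - 1)"
      proof (rule mode_local)
        show "m - 1 \<le> B" using mB by simp
      next
        fix i assume "i < m - 1"
        then have "i < m" by simp
        then show "mv f (m - 1) m d i \<le> mv f (m - 1) m d (Suc i)"
          using L[of i] fm \<open>i < m - 1\<close> unfolding mv_def d_def by auto
      next
        fix i assume "m - 1 \<le> i" "i < B"
        then show "mv f (m - 1) m d (Suc i) \<le> mv f (m - 1) m d i"
          using fm fnn[of i] fnn[of "m - 1"] fz[of "Suc i"] A1 km' unfolding mv_def d_def by auto
      qed
      then show False using km' mB fm by (intro TC[of "m - 1" m d]) (auto simp: unimodal_mode d_def)
    qed
    have A3: "f j = f (Suc j)" if "0 \<le> j" "Suc j < k" for j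
    proof (rule ccontr)
      assume ne: "f j \<noteq> f (Suc j)"
      have "f j \<le> f (Suc j)" using L[of j] that A2 by simp
      then have lt: "f j < f (Suc j)" using ne by simp
      define d where "d = (f (Suc j) - f j) / 2"
      have dd: "2 * d = f (Suc j) - f j" "0 < d" using lt unfolding d_def by simp_all
      have "mode B (mv f j (Suc j) d) m"
      proof (rule mode_local[OF mB])
        fix i assume im: "i < m"
        consider "i = j" | "Suc i = j" | "i = Suc j" | "i \<noteq> j \<and> Suc i \<noteq> j \<and> i \<noteq> Suc j" by blast
        then show "mv f j (Suc j) d i \<le> mv f j (Suc j) d (Suc i)"
        proof cases
          case 1 then show ?thesis using dd by (simp add: mv_def)
        next
          case 2 then show ?thesis using dd L[of i] im by (simp add: mv_def)
        next
          case 3 then show ?thesis using dd L[of i] im by (simp add: mv_def)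
        next
          case 4 then show ?thesis using L[of i] im by (simp add: mv_def)
        qed
      next
        fix i assume "m \<le> i" "i < B"
        then show "mv f j (Suc j) d (Suc i) \<le> mv f j (Suc j) d i"
          using R[of i] that A2 unfolding mv_def by auto
      qed
      moreover have "d \<le> f (Suc j)" using dd fnn[of j] by linarith
      ultimately show False using that kB dd(2) by (intro TC[of j "Suc j" d]) (auto simp: unimodal_mode)
    qed
    have "real iM = real B * t" using A1 A2 k by (simp only:)
    moreover have "\<forall>i. i < iM \<longrightarrow> f i = f 0 \<and> f i \<le> f iM"
    proof (intro allI impI conjI)
      fix i assume "i < iM"
      then have ik: "i < k" using A1 A2 by simp
      show "f i = f 0" by (rule chain_eq[of 0 k f, OF A3]) (use ik in auto)
      show "f i \<le> f iM" using mode_max[OF mm, of i] A1 ik A2 mB by simp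
    qed
    ultimately show ?thesis by blast
  next
    case False
    then have allk: "\<And>m'. mode B f m' \<Longrightarrow> m' < k" by (meson not_le)
    obtain m where mm: "mode B f m" and mlarge: "\<And>m'. mode B f m' \<Longrightarrow> m' \<le> m"
      using largest_mode[OF uni] by blast
    have mk: "m < k" using allk[OF mm] .
    have mB: "m \<le> B" using mm unfolding mode_def by auto
    have L: "\<And>i. i < m \<Longrightarrow> f i \<le> f (Suc i)" using mm unfolding mode_def by auto
    have R: "\<And>i. m \<le> i \<Longrightarrow> i < B \<Longrightarrow> f (Suc i) \<le> f i" using mm unfolding mode_def by auto
    have "f (Suc m) \<le> f m" using R[of m] mk kB by simp
    moreover have "f (Suc m) \<noteq> f m"
    proof
      assume "f (Suc m) = f m"
      then have "mode B f (Suc m)" using mode_argmax[OF mm, of "Suc m"] mk kB by auto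
      then show False using mlarge by fastforce
    qed
    ultimately have gm: "f (Suc m) < f m" by simp
    have B1: "m = 0"
    proof (rule ccontr)
      assume "m \<noteq> 0"
      then obtain m' where m': "m = Suc m'" by (cases m) auto
      show False
      proof (cases "f m' = f m")
        case True
        define d where "d = (f m - f (Suc m)) / 2"
        have dd: "2 * d = f m - f (Suc m)" "0 < d" using gm unfolding d_def by simp_all
        have "mode B (mv f m' m d) m'"
        proof (rule mode_local)
          show "m' \<le> B" using mB m' by simp
        next
          fix i assume im: "i < m'"
          show "mv f m' m d i \<le> mv f m' m d (Suc i)"
          proof (cases "Suc i = m'")
            case True then show ?thesis using L[of i] im m' dd by (simp add: mv_def)
          next
            case False then show ?thesis using L[of i] im m' by (simp add: mv_def)
          qed
        next
          fix i assume im: "m' \<le> i" "i < B"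
          consider "i = m'" | "i = m" | "m < i" using im m' by linarith
          then show "mv f m' m d (Suc i) \<le> mv f m' m d i"
          proof cases
            case 1 then show ?thesis using True dd m' by (simp add: mv_def)
          next
            case 2 then show ?thesis using dd m' by (simp add: mv_def)
          next
            case 3 then show ?thesis using R[of i] im m' by (simp add: mv_def)
          qed
        qed
        moreover have "d \<le> f m" using dd fnn[of "Suc m"] by linarith
        ultimately show False using m' mB mk dd(2) by (intro TC[of m' m d]) (auto simp: unimodal_mode)
      next
        case False
        then have lt: "f m' < f m" using L[of m'] m' by simp
        define d where "d = min (f m - f m') (f m - f (Suc m)) / 2"
        have dd: "2 * d \<le> f m - f m'" "2 * d \<le> f m - f (Suc m)" "0 < d"
          using gm lt unfolding d_def by auto
        have "mode B (mv f m' m d) m"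
        proof (rule mode_local[OF mB])
          fix i assume im: "i < m"
          consider "i = m'" | "Suc i = m'" | "Suc i < m'" using im m' by linarith
          then show "mv f m' m d i \<le> mv f m' m d (Suc i)"
          proof cases
            case 1 then show ?thesis using dd m' by (simp add: mv_def)
          next
            case 2 then show ?thesis using L[of i] im m' dd by (simp add: mv_def)
          next
            case 3 then show ?thesis using L[of i] im m' by (simp add: mv_def)
          qed
        next
          fix i assume im: "m \<le> i" "i < B"
          show "mv f m' m d (Suc i) \<le> mv f m' m d i"
          proof (cases "i = m")
            case True then show ?thesis using dd m' by (simp add: mv_def)
          next
            case False then show ?thesis using R[of i] im m' by (simp add: mv_def)
          qed
        qed
        moreover have "d \<le> f m" using dd fnn[of "Suc m"] by linarith
        ultimately show False using m' mB mk dd(3) by (intro TC[of m' m d]) (auto simp: unimodal_mode)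
      qed
    qed
    have R0: "\<And>i. i < B \<Longrightarrow> f (Suc i) \<le> f i" using R B1 by simp
    have B2: "f j = f (Suc j)" if j1: "1 \<le> j" and jk: "j < k" for j
    proof (rule ccontr)
      assume ne: "f j \<noteq> f (Suc j)"
      then have lt: "f (Suc j) < f j" using R0[of j] jk kB by simp
      define d where "d = f j - f (Suc j)"
      have dd: "0 < d" "d \<le> f j" using lt fnn[of "Suc j"] unfolding d_def by auto
      have "mode B (mv f 0 j d) 0"
      proof (rule mode_local)
        fix i assume im: "0 \<le> i" "i < B"
        consider "i = 0" | "Suc i = j" "i \<noteq> 0" | "i = j" | "i \<noteq> 0" "Suc i \<noteq> j" "i \<noteq> j" by blast
        then show "mv f 0 j d (Suc i) \<le> mv f 0 j d i"
        proof cases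
          case 1 then show ?thesis using R0[of 0] im dd j1 by (auto simp: mv_def)
        next
          case 2 then show ?thesis using R0[of i] im dd d_def by (simp add: mv_def)
        next
          case 3 then show ?thesis using j1 d_def by (simp add: mv_def)
        next
          case 4 then show ?thesis using R0[of i] im by (simp add: mv_def)
        qed
      qed auto
      then show False using j1 jk kB dd by (intro TC[of 0 j d]) (auto simp: unimodal_mode)
    qed
    have B3: "f p = f (Suc p)" if kp: "k \<le> p" and piM: "Suc p < iM" for p
    proof (rule ccontr)
      assume ne: "f p \<noteq> f (Suc p)"
      then have lt: "f (Suc p) < f p" using R0[of p] piM iMB by simp
      define d where "d = min (f p - f (Suc p)) (f iM)"
      have dd: "0 < d" "d \<le> f p - f (Suc p)" "d \<le> f iM" using lt fiM unfolding d_def by auto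
      have "mode B (mv f (Suc p) iM d) 0"
      proof (rule mode_local)
        fix i assume im: "0 \<le> i" "i < B"
        consider "i = p" | "i = Suc p" | "Suc i = iM" "i \<noteq> Suc p" | "i = iM"
          | "i \<noteq> p" "i \<noteq> Suc p" "Suc i \<noteq> iM" "i \<noteq> iM" by blast
        then show "mv f (Suc p) iM d (Suc i) \<le> mv f (Suc p) iM d i"
        proof cases
          case 1 then show ?thesis using dd piM by (simp add: mv_def)
        next
          case 2 then show ?thesis using dd piM R0[of i] im by (cases "Suc (Suc p) = iM") (simp_all add: mv_def)
        next
          case 3 then show ?thesis using dd piM R0[of i] im by (simp add: mv_def)
        next
          case 4 then show ?thesis using dd piM fz[of "Suc i"] by (simp add: mv_def)
        next
          case 5 then show ?thesis using R0[of i] im by (simp add: mv_def)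
        qed
      qed auto
      then show False using kp piM iMB dd by (intro TC[of "Suc p" iM d]) (auto simp: unimodal_mode)
    qed
    have step: "f j = f (Suc j)" if "1 \<le> j" "Suc j < iM" for j
    proof (cases "j < k")
      case True then show ?thesis using B2 that by simp
    next
      case False then show ?thesis using B3 that by simp
    qed
    have "f 0 > f 1" using gm B1 by simp
    moreover have "\<forall>i. 1 \<le> i \<and> i < iM \<longrightarrow> f i = f 1 \<and> f iM \<le> f i"
    proof (intro allI impI conjI)
      fix i assume i: "1 \<le> i \<and> i < iM"
      show "f i = f 1" by (rule chain_eq[of 1 iM f, OF step]) (use i in auto)
      show "f iM \<le> f i" using mm B1 i iMB unfolding mode_def by auto
    qed
    ultimately show ?thesis by blast
  qed

  show ?thesis using Eeq shape unfolding iM_def Let_def by simp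
qed

end
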